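(* Let $A$ be a finite-dimensional Hilbert space and let $\{\Theta_\rho\}_{\rho\in\mathfrak{S}(A)}$ be a family of linear maps $\Theta_\rho:\mathfrak{B}(A)\to\mathfrak{B}(A)$ such that: $\Theta_\rho$ depends linearly on $\rho$; $\Theta_\rho(M)=\rho M$ whenever $M\in\mathfrak{B}(A)$ satisfies $[\rho,M]=0$; and each $\Theta_\rho$ is self-adjoint with respect to the Hilbert–Schmidt inner product $\langle X,Y\rangle=\mathrm{Tr}[X^\dagger Y]$. Then there is a real number $\mu$ such that $$\Theta_\rho(M)=\mu\,\rho M+(1-\mu)\,M\rho\quad\text{for all }\rho\in\mathfrak{S}(A),\ M\in\mathfrak{B}(A).$$ If moreover each $\Theta_\rho$ is positive semidefinite with respect to the Hilbert–Schmidt inner product (i.e. $\mathrm{Tr}[M^\dagger\Theta_\rho(M)]\ge0$ for all $M$), then $0\le\mu\le1$.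
   Context: $\mathfrak{B}(A)$ denotes the linear operators on $A$ and $\mathfrak{S}(A)$ the density operators on $A$; $[X,Y]=XY-YX$. Linear dependence on $\rho$ means $\rho\mapsto\Theta_\rho$ is (the restriction of) a linear map from $\mathfrak{B}(A)$ into the linear maps on $\mathfrak{B}(A)$. *)

theory Defs
  imports "HOL-Analysis.Analysis" "HOL-Library.Complex_Order"
begin

text \<open>Operators on the finite-dimensional Hilbert space A = complex^'n, represented
  as complex 'n x 'n matrices.\<close>

type_synonym 'n op = "complex^'n^'n"

definition mtrace :: "'n::finite op \<Rightarrow> complex" where
  "mtrace X = (\<Sum>i\<in>UNIV. X $ i $ i)"

definition dagger :: "'n::finite op \<Rightarrow> 'n op" where
  "dagger X = (\<chi> i j. cnj (X $ j $ i))"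

definition msmult :: "complex \<Rightarrow> 'n::finite op \<Rightarrow> 'n op" where
  "msmult c X = (\<chi> i j. c * X $ i $ j)"

definition hs_inner :: "'n::finite op \<Rightarrow> 'n op \<Rightarrow> complex" where
  "hs_inner X Y = mtrace (dagger X ** Y)"

definition op_linear :: "('n::finite op \<Rightarrow> 'm::finite op) \<Rightarrow> bool" where
  "op_linear f \<longleftrightarrow> (\<forall>X Y. f (X + Y) = f X + f Y) \<and> (\<forall>c X. f (msmult c X) = msmult c (f X))"

text \<open>Positive semidefinite: the quadratic form v^* X v is real and nonnegative for all v
  (ordering on complex numbers from Complex_Order).\<close>
definition psd :: "'n::finite op \<Rightarrow> bool" where
  "psd X \<longleftrightarrow> (\<forall>v::complex^'n. 0 \<le> (\<Sum>i\<in>UNIV. cnj (v $ i) * (X *v v) $ i))"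

definition density :: "'n::finite op \<Rightarrow> bool" where
  "density \<rho> \<longleftrightarrow> psd \<rho> \<and> mtrace \<rho> = 1"

end

theory Submission
  imports Defs
begin


definition E :: "'n::finite \<Rightarrow> 'n \<Rightarrow> 'n op" where
  "E a b = (\<chi> i j. if i = a \<and> j = b then 1 else 0)"

definition herm :: "'n::finite op \<Rightarrow> bool" where
  "herm X \<longleftrightarrow> dagger X = X"

lemma mat_eqI: "(\<And>i j. (X::'n::finite op) $ i $ j = Y $ i $ j) \<Longrightarrow> X = Y"
  by (simp add: vec_eq_iff)

lemma msmult_comp[simp]: "msmult c X $ i $ j = c * X $ i $ j"
  by (simp add: msmult_def)
lemma dagger_comp[simp]: "dagger X $ i $ j = cnj (X $ j $ i)"
  by (simp add: dagger_def)
lemma E_comp[simp]: "E a b $ i $ j = (if i = a \<and> j = b then 1 else 0)"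
  by (simp add: E_def)
lemma mult_comp: "((X::'n::finite op) ** Y) $ i $ j = (\<Sum>k\<in>UNIV. X $ i $ k * Y $ k $ j)"
  by (simp add: matrix_matrix_mult_def)

lemma hs_inner_alt: "hs_inner X Y = (\<Sum>i\<in>UNIV. \<Sum>j\<in>UNIV. cnj (X $ i $ j) * Y $ i $ j)"
proof -
  have "hs_inner X Y = (\<Sum>i\<in>UNIV. \<Sum>k\<in>UNIV. cnj (X $ k $ i) * Y $ k $ i)"
    unfolding hs_inner_def mtrace_def by (simp add: mult_comp)
  also have "\<dots> = (\<Sum>k\<in>UNIV. \<Sum>i\<in>UNIV. cnj (X $ k $ i) * Y $ k $ i)"
    by (rule sum.swap)
  finally show ?thesis .
qed

lemma sum2_delta: "(\<Sum>i\<in>(UNIV::'n::finite set). \<Sum>j\<in>(UNIV::'n set). if i = p \<and> j = q then g i j else (0::complex)) = g p q"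
proof -
  have "\<And>i. (\<Sum>j\<in>(UNIV::'n set). if i = p \<and> j = q then g i j else (0::complex)) = (if i = p then g i q else 0)"
  proof -
    fix i
    have "(\<Sum>j\<in>(UNIV::'n set). if i = p \<and> j = q then g i j else (0::complex)) = (\<Sum>j\<in>(UNIV::'n set). if j = q then (if i = p then g i j else 0) else 0)"
      by (rule sum.cong) auto
    then show "(\<Sum>j\<in>(UNIV::'n set). if i = p \<and> j = q then g i j else (0::complex)) = (if i = p then g i q else 0)"
      by simp
  qed
  then show ?thesis by simp
qed

lemma hs_E_left[simp]: "hs_inner (E p q) Y = Y $ p $ q"
proof -
  have "hs_inner (E p q) Y = (\<Sum>i\<in>UNIV. \<Sum>j\<in>UNIV. if i = p \<and> j = q then Y $ i $ j else 0)"
    unfolding hs_inner_alt by (intro sum.cong) auto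
  then show ?thesis using sum2_delta[of p q "\<lambda>i j. Y $ i $ j"] by simp
qed

lemma hs_E_right[simp]: "hs_inner X (E p q) = cnj (X $ p $ q)"
proof -
  have "hs_inner X (E p q) = (\<Sum>i\<in>UNIV. \<Sum>j\<in>UNIV. if i = p \<and> j = q then cnj (X $ i $ j) else 0)"
    unfolding hs_inner_alt by (intro sum.cong) auto
  then show ?thesis using sum2_delta[of p q "\<lambda>i j. cnj (X $ i $ j)"] by simp
qed

lemma hs_add_left: "hs_inner (X + Y) Z = hs_inner X Z + hs_inner Y Z"
  by (simp add: hs_inner_alt distrib_right sum.distrib)
lemma hs_add_right: "hs_inner Z (X + Y) = hs_inner Z X + hs_inner Z Y"
  by (simp add: hs_inner_alt distrib_left sum.distrib)
lemma hs_smult_left: "hs_inner (msmult c X) Z = cnj c * hs_inner X Z"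
  by (simp add: hs_inner_alt sum_distrib_left mult.assoc)
lemma hs_smult_right: "hs_inner Z (msmult c X) = c * hs_inner Z X"
  by (simp add: hs_inner_alt sum_distrib_left mult.left_commute)
lemma hs_zero_left[simp]: "hs_inner 0 Z = 0"
  by (simp add: hs_inner_alt)
lemma hs_zero_right[simp]: "hs_inner Z 0 = 0"
  by (simp add: hs_inner_alt)

lemma E_mult: "E a b ** E c d = (if b = c then E a d else (0::'n::finite op))"
proof (rule mat_eqI)
  fix i j
  have "(\<Sum>k\<in>UNIV. (if i = a \<and> k = b then 1 else 0) * (if k = c \<and> j = d then 1 else (0::complex)))
     = (\<Sum>k\<in>UNIV. if k = b then (if i = a \<and> b = c \<and> j = d then 1 else 0) else 0)"
    by (rule sum.cong) auto
  then show "(E a b ** E c d) $ i $ j = (if b = c then E a d else (0::'n::finite op)) $ i $ j"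
    by (simp add: mult_comp)
qed

lemma dagger_E[simp]: "dagger (E a b) = E b a"
  by (rule mat_eqI) auto
lemma dagger_dagger[simp]: "dagger (dagger X) = X"
  by (rule mat_eqI) auto
lemma dagger_add: "dagger (X + Y) = dagger X + dagger Y"
  by (rule mat_eqI) auto
lemma dagger_smult: "dagger (msmult c X) = msmult (cnj c) (dagger X)"
  by (rule mat_eqI) auto
lemma dagger_mult: "dagger ((X::'n::finite op) ** Y) = dagger Y ** dagger X"
  by (rule mat_eqI) (simp add: mult_comp mult.commute)
lemma dagger_mat1[simp]: "dagger (mat 1 :: 'n::finite op) = mat 1"
  by (rule mat_eqI) (simp add: mat_def)

lemma smult_mult_left: "msmult c (X::'n::finite op) ** Y = msmult c (X ** Y)"
  by (rule mat_eqI) (simp add: mult_comp sum_distrib_left mult.assoc)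
lemma smult_mult_right: "(X::'n::finite op) ** msmult c Y = msmult c (X ** Y)"
  by (rule mat_eqI) (simp add: mult_comp sum_distrib_left mult.left_commute)
lemma smult_add: "msmult c (X + Y) = msmult c X + msmult c Y"
  by (rule mat_eqI) (simp add: distrib_left)
lemma smult_add2: "msmult (c + d) X = msmult c X + msmult d X"
  by (rule mat_eqI) (simp add: distrib_right)
lemma smult_smult: "msmult c (msmult d X) = msmult (c * d) X"
  by (rule mat_eqI) simp
lemma smult_one[simp]: "msmult 1 X = X"
  by (rule mat_eqI) simp
lemma smult_zero[simp]: "msmult 0 X = 0"
  by (rule mat_eqI) simp
lemma smult_zero2[simp]: "msmult c 0 = 0"
  by (rule mat_eqI) simp
lemma smult_minus1: "msmult (-1) X = - X"
  by (rule mat_eqI) simp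
lemma smult_minus: "msmult c (X - Y) = msmult c X - msmult c Y"
  by (rule mat_eqI) (simp add: right_diff_distrib)
lemma matrix_add_rdistrib': "((X::'n::finite op) + Y) ** (Z::'n op) = X ** Z + Y ** Z"
  by (rule mat_eqI) (simp add: mult_comp distrib_right sum.distrib)
lemma matrix_diff_ldistrib: "(Z::'n::finite op) ** (X - Y::'n op) = Z ** X - Z ** Y"
  by (rule mat_eqI) (simp add: mult_comp right_diff_distrib sum_subtractf)
lemma matrix_diff_rdistrib: "((X::'n::finite op) - Y) ** (Z::'n op) = X ** Z - Y ** Z"
  by (rule mat_eqI) (simp add: mult_comp left_diff_distrib sum_subtractf)



definition qf :: "'n::finite op \<Rightarrow> complex^'n \<Rightarrow> complex" where
  "qf X v = (\<Sum>i\<in>UNIV. cnj (v $ i) * (X *v v) $ i)"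

lemma psd_qf: "psd X \<longleftrightarrow> (\<forall>v. 0 \<le> qf X v)"
  by (simp add: psd_def qf_def)

lemma mv_comp: "((X::'n::finite op) *v v) $ i = (\<Sum>j\<in>UNIV. X $ i $ j * v $ j)"
  by (simp add: matrix_vector_mult_def)

lemma qf_alt: "qf X v = (\<Sum>i\<in>UNIV. \<Sum>j\<in>UNIV. cnj (v $ i) * X $ i $ j * v $ j)"
  by (simp add: qf_def mv_comp sum_distrib_left mult.assoc)

lemma qf1: "qf X (\<chi> k. if k = i then 1 else 0) = X $ i $ i"
proof -
  have "qf X (\<chi> k. if k = i then 1 else 0) = (\<Sum>k\<in>UNIV. \<Sum>l\<in>UNIV. if k = i \<and> l = i then X $ k $ l else 0)"
    unfolding qf_alt by (intro sum.cong) auto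
  then show ?thesis using sum2_delta[of i i "\<lambda>k l. X $ k $ l"] by simp
qed

lemma qf2:
  assumes "i \<noteq> j"
  shows "qf X (\<chi> k. (if k = i then a else 0) + (if k = j then b else 0))
       = cnj a * a * X$i$i + cnj a * b * X$i$j + cnj b * a * X$j$i + cnj b * b * X$j$j"
proof -
  let ?v = "(\<chi> k. (if k = i then a else 0) + (if k = j then b else 0)) :: complex^'a"
  have inner: "(X *v ?v) $ k = X$k$i * a + X$k$j * b" for k
  proof -
    have "(X *v ?v) $ k = (\<Sum>l\<in>UNIV. (if l = i then X$k$i * a else 0) + (if l = j then X$k$j * b else 0))"
      unfolding mv_comp by (intro sum.cong) (auto simp: distrib_left)
    then show ?thesis by (simp add: sum.distrib)
  qed
  have "qf X ?v = (\<Sum>k\<in>UNIV. (if k = i then cnj a * (X$i$i * a + X$i$j * b) else 0)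
                    + (if k = j then cnj b * (X$j$i * a + X$j$j * b) else 0))"
    unfolding qf_def inner using assms by (intro sum.cong) (auto simp: distrib_right)
  also have "\<dots> = cnj a * (X$i$i * a + X$i$j * b) + cnj b * (X$j$i * a + X$j$j * b)"
    by (simp add: sum.distrib)
  finally show ?thesis by (simp add: algebra_simps)
qed

lemma nonneg_Im: "0 \<le> (z::complex) \<Longrightarrow> Im z = 0"
  by (simp add: less_eq_complex_def)

lemma psd_herm: assumes "psd X" shows "herm X"
proof -
  have q: "\<And>v. Im (qf X v) = 0" using assms by (simp add: psd_qf nonneg_Im)
  have d: "Im (X$i$i) = 0" for i
  proof -
    have "Im (qf X (\<chi> k. if k = i then 1 else 0)) = 0" by (rule q)
    then show ?thesis by (simp only: qf1)
  qed
  have key: "X $ j $ i = cnj (X $ i $ j)" for i j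
  proof (cases "i = j")
    case True then show ?thesis using d[of i] by (simp add: complex_eq_iff)
  next
    case False
    define v1 where "v1 = ((\<chi> k. (if k = i then 1 else 0) + (if k = j then 1 else 0)) :: complex^'a)"
    define v2 where "v2 = ((\<chi> k. (if k = i then 1 else 0) + (if k = j then \<i> else 0)) :: complex^'a)"
    have e1: "qf X v1 = X$i$i + X$i$j + X$j$i + X$j$j"
      using qf2[OF False, of X 1 1] unfolding v1_def[symmetric] by simp
    have e2: "qf X v2 = X$i$i + \<i> * X$i$j - \<i> * X$j$i + X$j$j"
      using qf2[OF False, of X 1 \<i>] unfolding v2_def[symmetric] by simp
    have 1: "Im (X$i$j) + Im (X$j$i) = 0"
      using q[of v1] d[of i] d[of j]
      unfolding e1 by simp
    have 2: "Re (X$i$j) - Re (X$j$i) = 0"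
      using q[of v2] d[of i] d[of j]
      unfolding e2 by simp
    show ?thesis using 1 2 by (simp add: complex_eq_iff)
  qed
  show ?thesis unfolding herm_def
  proof (intro mat_eqI)
    fix i j show "dagger X $ i $ j = X $ i $ j" using key[of j i] by simp
  qed
qed



lemma qf_add: "qf (A + B) v = qf A v + qf B v"
  by (simp add: qf_alt distrib_left distrib_right sum.distrib)
lemma qf_smult: "qf (msmult c A) v = c * qf A v"
  by (simp add: qf_alt sum_distrib_left mult_ac)
lemma qf_mat1: "qf (mat 1) v = (\<Sum>i\<in>UNIV. cnj (v $ i) * v $ i)"
  by (simp add: qf_def)
lemma mtrace_add: "mtrace (A + B) = mtrace A + mtrace B"
  by (simp add: mtrace_def sum.distrib)
lemma mtrace_smult: "mtrace (msmult c A) = c * mtrace A"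
  by (simp add: mtrace_def sum_distrib_left)
lemma mtrace_mat1: "mtrace (mat 1 :: 'n::finite op) = of_nat CARD('n)"
  by (simp add: mtrace_def mat_def)

lemma cnj_mult_self: "cnj z * z = complex_of_real ((cmod z)\<^sup>2)"
  using complex_norm_square[of z] by (simp add: mult.commute)

definition sig0 :: "'n::finite op" where
  "sig0 = msmult (1 / of_nat CARD('n)) (mat 1)"

lemma nonneg_complexI: "Im z = 0 \<Longrightarrow> 0 \<le> Re z \<Longrightarrow> 0 \<le> (z::complex)"
  by (simp add: less_eq_complex_def)

lemma density_sig0: "density (sig0 :: 'n::finite op)"
proof -
  have "0 \<le> qf (sig0 :: 'n op) v" for v
  proof -
    have "qf (sig0 :: 'n op) v = (1 / of_nat CARD('n)) * (\<Sum>i\<in>UNIV. complex_of_real ((cmod (v $ i))\<^sup>2))"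
      by (simp add: sig0_def qf_smult qf_mat1 cnj_mult_self)
    also have "\<dots> = complex_of_real ((1 / real CARD('n)) * (\<Sum>i\<in>UNIV. (cmod (v $ i))\<^sup>2))"
      by simp
    finally show ?thesis by (simp add: less_eq_complex_def sum_nonneg)
  qed
  moreover have "mtrace (sig0 :: 'n op) = 1"
    by (simp add: sig0_def mtrace_smult mtrace_mat1)
  ultimately show ?thesis by (simp add: density_def psd_qf)
qed

lemma herm_diag_real: "herm H \<Longrightarrow> Im (H $ i $ i) = 0"
  unfolding herm_def by (metis Im_complex_of_real Reals_cnj_iff complex_is_Real_iff dagger_comp)

lemma qf_herm_real: assumes "herm H" shows "Im (qf H v) = 0"
proof -
  have h: "cnj (H $ i $ j) = H $ j $ i" for i j
    using assms unfolding herm_def by (metis dagger_comp)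
  have "cnj (qf H v) = (\<Sum>i\<in>UNIV. \<Sum>j\<in>UNIV. v $ i * H $ j $ i * cnj (v $ j))"
    by (simp add: qf_alt h)
  also have "\<dots> = (\<Sum>j\<in>UNIV. \<Sum>i\<in>UNIV. v $ i * H $ j $ i * cnj (v $ j))"
    by (rule sum.swap)
  also have "\<dots> = qf H v"
    by (simp add: qf_alt mult_ac)
  finally have "cnj (qf H v) = qf H v" .
  from arg_cong[OF this, of Im] show ?thesis by simp
qed

lemma prod_le_sumsq:
  fixes v :: "complex^'n::finite"
  shows "cmod (v $ i) * cmod (v $ j) \<le> (\<Sum>k\<in>UNIV. (cmod (v $ k))\<^sup>2)"
proof -
  let ?S = "(\<Sum>k\<in>UNIV. (cmod (v $ k))\<^sup>2)"
  have a: "(cmod (v $ i))\<^sup>2 \<le> ?S" by (rule member_le_sum) auto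
  have b: "(cmod (v $ j))\<^sup>2 \<le> ?S" by (rule member_le_sum) auto
  have "cmod (v $ i) * cmod (v $ j) \<le> ((cmod (v $ i))\<^sup>2 + (cmod (v $ j))\<^sup>2) / 2"
  proof -
    have "0 \<le> (cmod (v $ i) - cmod (v $ j))\<^sup>2" by simp
    then show ?thesis unfolding power2_diff by simp
  qed
  moreover have "((cmod (v $ i))\<^sup>2 + (cmod (v $ j))\<^sup>2) / 2 \<le> ?S"
    using add_mono[OF a b] by (simp add: field_simps)
  ultimately show ?thesis by (rule order_trans)
qed

lemma qf_bound:
  "cmod (qf H v) \<le> (\<Sum>i\<in>UNIV. \<Sum>j\<in>UNIV. cmod (H $ i $ j)) * (\<Sum>k\<in>UNIV. (cmod (v $ k))\<^sup>2)"
proof -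
  let ?S = "(\<Sum>k\<in>UNIV. (cmod (v $ k))\<^sup>2)"
  have "cmod (qf H v) \<le> (\<Sum>i\<in>UNIV. cmod (\<Sum>j\<in>UNIV. cnj (v $ i) * H $ i $ j * v $ j))"
    unfolding qf_alt by (rule norm_sum)
  also have "\<dots> \<le> (\<Sum>i\<in>UNIV. \<Sum>j\<in>UNIV. cmod (cnj (v $ i) * H $ i $ j * v $ j))"
    by (intro sum_mono norm_sum)
  also have "\<dots> \<le> (\<Sum>i\<in>UNIV. \<Sum>j\<in>UNIV. cmod (H $ i $ j) * ?S)"
  proof (intro sum_mono)
    fix i j
    have "cmod (cnj (v $ i) * H $ i $ j * v $ j) = cmod (H $ i $ j) * (cmod (v $ i) * cmod (v $ j))"
      by (simp add: norm_mult)
    also have "\<dots> \<le> cmod (H $ i $ j) * ?S"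
      by (intro mult_left_mono prod_le_sumsq) auto
    finally show "cmod (cnj (v $ i) * H $ i $ j * v $ j) \<le> cmod (H $ i $ j) * ?S" .
  qed
  also have "\<dots> = (\<Sum>i\<in>UNIV. \<Sum>j\<in>UNIV. cmod (H $ i $ j)) * ?S"
    by (simp add: sum_distrib_right)
  finally show ?thesis .
qed

lemma herm_decomp:
  fixes H :: "'n::finite op"
  assumes "herm H"
  shows "\<exists>\<rho> (s::real) (r::real). density \<rho> \<and> H = msmult (of_real s) \<rho> + msmult (of_real r) sig0
           \<and> (\<forall>Y. H ** Y = Y ** H \<longrightarrow> \<rho> ** Y = Y ** \<rho>)"
proof -
  define T where "T = (\<Sum>i\<in>UNIV. \<Sum>j\<in>UNIV. cmod (H $ i $ j))"
  have T0: "0 \<le> T" unfolding T_def by (intro sum_nonneg) auto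
  define t where "t = 1 + T"
  define K where "K = H + msmult (of_real t) (mat 1)"
  have qfK: "0 \<le> qf K v" for v
  proof -
    let ?S = "(\<Sum>k\<in>UNIV. (cmod (v $ k))\<^sup>2)"
    have S0: "0 \<le> ?S" by (intro sum_nonneg) auto
    have "qf K v = qf H v + of_real t * (\<Sum>i\<in>UNIV. complex_of_real ((cmod (v $ i))\<^sup>2))"
      by (simp add: K_def qf_add qf_smult qf_mat1 cnj_mult_self)
    also have "\<dots> = qf H v + of_real (t * ?S)" by simp
    finally have e: "qf K v = qf H v + of_real (t * ?S)" .
    have "\<bar>Re (qf H v)\<bar> \<le> T * ?S"
      using qf_bound[of H v] abs_Re_le_cmod[of "qf H v"] unfolding T_def by linarith
    then have "0 \<le> Re (qf H v) + t * ?S" unfolding t_def using S0 by (simp add: algebra_simps)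
    then show ?thesis unfolding e using qf_herm_real[OF assms, of v]
      by (intro nonneg_complexI) simp_all
  qed
  have trH_Im: "Im (mtrace H) = 0"
    unfolding mtrace_def using herm_diag_real[OF assms] by (simp add: Im_sum)
  have "\<bar>Re (mtrace H)\<bar> \<le> T"
  proof -
    have "\<bar>Re (mtrace H)\<bar> \<le> cmod (mtrace H)" by (rule abs_Re_le_cmod)
    also have "\<dots> \<le> (\<Sum>i\<in>UNIV. cmod (H $ i $ i))" unfolding mtrace_def by (rule norm_sum)
    also have "\<dots> \<le> T" unfolding T_def
      by (intro sum_mono member_le_sum) auto
    finally show ?thesis .
  qed
  define \<tau> where "\<tau> = Re (mtrace H) + t * real CARD('n)"
  have n1: "1 \<le> real CARD('n)" by simp
  have "t \<le> t * real CARD('n)" using n1 T0 unfolding t_def by (simp add: mult_le_cancel_left1)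
  then have tau_pos: "0 < \<tau>" unfolding \<tau>_def t_def using \<open>\<bar>Re (mtrace H)\<bar> \<le> T\<close> by linarith
  have trK: "mtrace K = of_real \<tau>"
    unfolding K_def \<tau>_def by (simp add: mtrace_add mtrace_smult mtrace_mat1 complex_eq_iff trH_Im)
  define \<rho> where "\<rho> = msmult (of_real (1 / \<tau>)) K"
  have dens: "density \<rho>"
  proof -
    have "0 \<le> qf \<rho> v" for v
    proof -
      have "qf \<rho> v = of_real (1 / \<tau>) * qf K v" by (simp add: \<rho>_def qf_smult)
      moreover have "Im (qf K v) = 0" "0 \<le> Re (qf K v)" using qfK[of v] by (auto simp: less_eq_complex_def)
      ultimately show ?thesis using tau_pos by (intro nonneg_complexI) simp_all
    qed
    moreover have "mtrace \<rho> = 1" using tau_pos by (simp add: \<rho>_def mtrace_smult trK)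
    ultimately show ?thesis by (simp add: density_def psd_qf)
  qed
  have Krho: "K = msmult (of_real \<tau>) \<rho>"
    using tau_pos by (simp add: \<rho>_def smult_smult)
  have "H = K - msmult (of_real t) (mat 1)" by (simp add: K_def)
  also have "msmult (of_real t) (mat 1) = msmult (of_real (t * real CARD('n))) (sig0 :: 'n op)"
    by (simp add: sig0_def smult_smult)
  finally have Hdec: "H = msmult (of_real \<tau>) \<rho> + msmult (of_real (- (t * real CARD('n)))) sig0"
    unfolding Krho by (simp add: smult_minus1[symmetric] smult_smult)
  have comm: "\<rho> ** Y = Y ** \<rho>" if "H ** Y = Y ** H" for Y
  proof -
    have "K ** Y = Y ** K"
      unfolding K_def by (simp add: matrix_add_rdistrib' matrix_add_ldistrib smult_mult_left smult_mult_right that)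
    then show ?thesis by (simp add: \<rho>_def smult_mult_left smult_mult_right)
  qed
  show ?thesis using dens Hdec comm by blast
qed



lemma herm_to_all:
  assumes add: "\<And>X Y. Q X \<Longrightarrow> Q Y \<Longrightarrow> Q (X + Y)"
    and sm: "\<And>c X. Q X \<Longrightarrow> Q (msmult c X)"
    and h: "\<And>H. herm H \<Longrightarrow> Q H"
  shows "Q (X::'n::finite op)"
proof -
  define H1 where "H1 = msmult (1/2) (X + dagger X)"
  define H2 where "H2 = msmult (- \<i>/2) (X - dagger X)"
  have "herm H1" unfolding herm_def H1_def by (intro mat_eqI) (simp add: algebra_simps)
  moreover have "herm H2" unfolding herm_def H2_def by (intro mat_eqI) (simp add: algebra_simps)
  moreover have "X = H1 + msmult \<i> H2" unfolding H1_def H2_def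
    by (intro mat_eqI) (simp add: algebra_simps)
  ultimately show ?thesis using add sm h by metis
qed

lemma sig0_comm: "(sig0 :: 'n::finite op) ** (Y :: 'n op) = Y ** sig0"
  by (simp add: sig0_def smult_mult_left smult_mult_right)

lemma dens_to_all:
  assumes add: "\<And>X Y. Q X \<Longrightarrow> Q Y \<Longrightarrow> Q (X + Y)"
    and sm: "\<And>c X. Q X \<Longrightarrow> Q (msmult c X)"
    and d: "\<And>\<rho>. density \<rho> \<Longrightarrow> Q \<rho>"
  shows "Q (X::'n::finite op)"
proof (rule herm_to_all[where Q = Q, OF add sm])
  fix H :: "'n op" assume "herm H"
  from herm_decomp[OF this] obtain \<rho> s r where "density \<rho>" and "H = msmult (of_real s) \<rho> + msmult (of_real r) sig0"
    by blast
  then show "Q H" using add sm d density_sig0 by metis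
qed auto

lemma hs_diff_right: "hs_inner Z (X - Y) = hs_inner Z X - hs_inner Z Y"
  by (simp add: hs_inner_alt right_diff_distrib sum_subtractf)
lemma hs_diff_left: "hs_inner (X - Y) Z = hs_inner X Z - hs_inner Y Z"
  by (simp add: hs_inner_alt left_diff_distrib sum_subtractf)

lemma hs_mult: "hs_inner Z ((A::'n::finite op) ** Y) = hs_inner (dagger A ** Z) Y"
  unfolding hs_inner_def by (simp add: dagger_mult matrix_mul_assoc)

lemma herm_mat1: "herm (mat 1 :: 'n::finite op)"
  by (simp add: herm_def)

locale P6 =
  fixes L :: "'n::finite op \<Rightarrow> 'n op \<Rightarrow> 'n op"
  assumes Llin: "\<And>M. op_linear (\<lambda>\<rho>. L \<rho> M)"
    and Ldens: "\<And>\<rho>. density \<rho> \<Longrightarrow> op_linear (L \<rho>)"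
    and Lcomm: "\<And>\<rho> M. density \<rho> \<Longrightarrow> \<rho> ** M = M ** \<rho> \<Longrightarrow> L \<rho> M = \<rho> ** M"
    and Lsa: "\<And>\<rho> X Y. density \<rho> \<Longrightarrow> hs_inner X (L \<rho> Y) = hs_inner (L \<rho> X) Y"
begin

lemma L_add1: "L (X + Y) M = L X M + L Y M"
  using Llin[of M] by (simp add: op_linear_def)
lemma L_sm1: "L (msmult c X) M = msmult c (L X M)"
  using Llin[of M] by (simp add: op_linear_def)

lemma L_lin_all: "op_linear (L X)"
proof (rule dens_to_all[where Q = "\<lambda>X. op_linear (L X)"])
  fix X Y assume "op_linear (L X)" "op_linear (L Y)"
  then show "op_linear (L (X + Y))"
    by (simp add: op_linear_def L_add1 smult_add add_ac)
next
  fix c X assume "op_linear (L X)"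
  then show "op_linear (L (msmult c X))"
    by (simp add: op_linear_def L_sm1 smult_add smult_smult mult.commute)
qed (rule Ldens)

lemma L_add2: "L X (Y + Z) = L X Y + L X Z"
  using L_lin_all[of X] by (simp add: op_linear_def)
lemma L_sm2: "L X (msmult c Y) = msmult c (L X Y)"
  using L_lin_all[of X] by (simp add: op_linear_def)

definition f :: "'n op \<Rightarrow> 'n op \<Rightarrow> 'n op" where
  "f X Y = L X Y - X ** Y"

lemma f_add1: "f (X + Y) M = f X M + f Y M"
  by (simp add: f_def L_add1 matrix_add_rdistrib')
lemma f_add2: "f X (Y + Z) = f X Y + f X Z"
  by (simp add: f_def L_add2 matrix_add_ldistrib)
lemma f_sm1: "f (msmult c X) M = msmult c (f X M)"
  by (simp add: f_def L_sm1 smult_mult_left smult_minus)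
lemma f_sm2: "f X (msmult c Y) = msmult c (f X Y)"
  by (simp add: f_def L_sm2 smult_mult_right smult_minus)
lemma f_neg1: "f (- X) M = - f X M"
  using f_sm1[of "-1" X M] by (simp add: smult_minus1)
lemma f_neg2: "f X (- M) = - f X M"
  using f_sm2[of X "-1" M] by (simp add: smult_minus1)
lemma f_diff1: "f (X - Y) M = f X M - f Y M"
  using f_add1[of X "- Y" M] by (simp add: f_neg1)
lemma f_diff2: "f X (Y - Z) = f X Y - f X Z"
  using f_add2[of X Y "- Z"] by (simp add: f_neg2)
lemma f_zero1[simp]: "f 0 M = 0"
  using f_sm1[of 0 X M for X] by simp
lemma f_zero2[simp]: "f X 0 = 0"
  using f_sm2[of X 0 M for M] by simp

lemma f_dens_comm: "density \<rho> \<Longrightarrow> \<rho> ** Y = Y ** \<rho> \<Longrightarrow> f \<rho> Y = 0"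
  by (simp add: f_def Lcomm)

lemma f_herm_comm:
  assumes "herm H" "H ** Y = Y ** H"
  shows "f H Y = 0"
proof -
  from herm_decomp[OF assms(1)] obtain \<rho> s r where d: "density \<rho>"
    and e: "H = msmult (of_real s) \<rho> + msmult (of_real r) sig0"
    and c: "\<forall>Y. H ** Y = Y ** H \<longrightarrow> \<rho> ** Y = Y ** \<rho>"
    by blast
  have "f \<rho> Y = 0" using f_dens_comm[OF d] c assms(2) by blast
  moreover have "f sig0 Y = 0" using f_dens_comm[OF density_sig0 sig0_comm] .
  ultimately show ?thesis unfolding e by (simp add: f_add1 f_sm1)
qed

lemma f_mat1: "f (mat 1) Y = 0"
  by (rule f_herm_comm[OF herm_mat1]) simp

lemma f_SA: "hs_inner Z (f X Y) = hs_inner (f (dagger X) Z) Y"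
proof -
  have "\<forall>Y Z. hs_inner Z (f X Y) = hs_inner (f (dagger X) Z) Y"
  proof (rule dens_to_all[where Q = "\<lambda>X. \<forall>Y Z. hs_inner Z (f X Y) = hs_inner (f (dagger X) Z) Y"])
    fix X X' assume a: "\<forall>Y Z. hs_inner Z (f X Y) = hs_inner (f (dagger X) Z) Y"
      and b: "\<forall>Y Z. hs_inner Z (f X' Y) = hs_inner (f (dagger X') Z) Y"
    show "\<forall>Y Z. hs_inner Z (f (X + X') Y) = hs_inner (f (dagger (X + X')) Z) Y"
      using a b by (simp add: f_add1 dagger_add hs_add_left hs_add_right)
  next
    fix c X assume a: "\<forall>Y Z. hs_inner Z (f X Y) = hs_inner (f (dagger X) Z) Y"
    show "\<forall>Y Z. hs_inner Z (f (msmult c X) Y) = hs_inner (f (dagger (msmult c X)) Z) Y"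
      using a by (simp add: f_sm1 dagger_smult hs_smult_left hs_smult_right)
  next
    fix \<rho> :: "'n op" assume d: "density \<rho>"
    then have h: "dagger \<rho> = \<rho>" using psd_herm unfolding density_def herm_def by blast
    show "\<forall>Y Z. hs_inner Z (f \<rho> Y) = hs_inner (f (dagger \<rho>) Z) Y"
      using d by (simp add: f_def hs_diff_left hs_diff_right hs_mult h Lsa)
  qed
  then show ?thesis by blast
qed

lemma herm_add: "herm A \<Longrightarrow> herm B \<Longrightarrow> herm (A + B)"
  by (simp add: herm_def dagger_add)
lemma herm_diff: "herm A \<Longrightarrow> herm B \<Longrightarrow> herm (A - B)"
  unfolding herm_def by (intro mat_eqI) (simp add: vec_eq_iff)

lemma J1: "herm H \<Longrightarrow> f H (H ** H) = 0"
  by (rule f_herm_comm) (simp_all add: matrix_mul_assoc)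

lemma J2:
  assumes "herm H" "herm K"
  shows "f H (H ** K + K ** H) + f K (H ** H) = 0"
proof -
  let ?A = "H ** H" and ?B = "H ** K + K ** H" and ?C = "K ** K"
  have e1: "(H + K) ** (H + K) = ?A + ?B + ?C"
    by (simp add: matrix_add_ldistrib matrix_add_rdistrib' add_ac)
  have e2: "(H - K) ** (H - K) = ?A - ?B + ?C"
    by (simp add: matrix_diff_ldistrib matrix_diff_rdistrib algebra_simps)
  have z1: "f (H + K) (?A + ?B + ?C) = 0"
    using J1[OF herm_add[OF assms]] unfolding e1 .
  have z2: "f (H - K) (?A - ?B + ?C) = 0"
    using J1[OF herm_diff[OF assms]] unfolding e2 .
  have a0: "f H ?A = 0" using J1[OF assms(1)] .
  have c0: "f K ?C = 0" using J1[OF assms(2)] .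
  have "f (H + K) (?A + ?B + ?C) - f (H - K) (?A - ?B + ?C)
        = (f H ?B + f K ?A) + (f H ?B + f K ?A) + (f K ?C + f K ?C)"
    by (simp add: f_add1 f_add2 f_diff1 f_diff2 algebra_simps)
  then have "(f H ?B + f K ?A) + (f H ?B + f K ?A) = 0" using z1 z2 c0 by simp
  then have "msmult 2 (f H ?B + f K ?A) = 0"
    by (simp add: smult_add2[of 1 1, simplified] )
  then have "msmult (1/2) (msmult 2 (f H ?B + f K ?A)) = 0" by simp
  then show ?thesis by (simp add: smult_smult)
qed


lemma half_zero: "A + A = 0 \<Longrightarrow> (A::'n op) = 0"
proof -
  assume "A + A = 0"
  then have "msmult 2 A = 0" by (simp add: smult_add2[of 1 1, simplified])
  then have "msmult (1/2) (msmult 2 A) = 0" by simp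
  then show ?thesis by (simp add: smult_smult)
qed

lemma J3:
  assumes "herm H"
  shows "f H (H ** Z + Z ** H) + f Z (H ** H) = 0"
proof -
  show ?thesis
  proof (rule herm_to_all[where Q = "\<lambda>Z. f H (H ** Z + Z ** H) + f Z (H ** H) = 0"])
    fix X Y assume a: "f H (H ** X + X ** H) + f X (H ** H) = 0" and b: "f H (H ** Y + Y ** H) + f Y (H ** H) = 0"
    have "f H (H ** (X + Y) + (X + Y) ** H) + f (X + Y) (H ** H)
        = (f H (H ** X + X ** H) + f X (H ** H)) + (f H (H ** Y + Y ** H) + f Y (H ** H))"
      by (simp add: matrix_add_ldistrib matrix_add_rdistrib' f_add1 f_add2 add_ac)
    then show "f H (H ** (X + Y) + (X + Y) ** H) + f (X + Y) (H ** H) = 0" using a b by simp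
  next
    fix c X assume a: "f H (H ** X + X ** H) + f X (H ** H) = 0"
    have "f H (H ** msmult c X + msmult c X ** H) + f (msmult c X) (H ** H)
        = msmult c (f H (H ** X + X ** H) + f X (H ** H))"
      by (simp add: smult_mult_left smult_mult_right f_sm1 f_sm2 smult_add[symmetric] f_add2[symmetric])
    then show "f H (H ** msmult c X + msmult c X ** H) + f (msmult c X) (H ** H) = 0" using a by simp
  next
    fix K :: "'n op" assume "herm K" then show "f H (H ** K + K ** H) + f K (H ** H) = 0" by (rule J2[OF assms])
  qed
qed

definition Jt :: "'n op \<Rightarrow> 'n op \<Rightarrow> 'n op \<Rightarrow> 'n op" where
  "Jt X Y Z = f X (Y ** Z + Z ** Y) + f Y (X ** Z + Z ** X) + f Z (X ** Y + Y ** X)"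

lemma Jt_herm:
  assumes "herm H1" "herm H2"
  shows "Jt H1 H2 Z = 0"
proof -
  have e: "f (H1 + H2) ((H1 + H2) ** Z + Z ** (H1 + H2)) + f Z ((H1 + H2) ** (H1 + H2))
     = (f H1 (H1 ** Z + Z ** H1) + f Z (H1 ** H1)) + (f H2 (H2 ** Z + Z ** H2) + f Z (H2 ** H2)) + Jt H1 H2 Z"
    unfolding Jt_def by (simp add: matrix_add_ldistrib matrix_add_rdistrib' f_add1 f_add2 add_ac)
  show ?thesis using e J3[OF herm_add[OF assms]] J3[OF assms(1)] J3[OF assms(2)] by simp
qed

lemma Jt_add1: "Jt (X + X') Y Z = Jt X Y Z + Jt X' Y Z"
  unfolding Jt_def by (simp add: matrix_add_ldistrib matrix_add_rdistrib' f_add1 f_add2 add_ac)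
lemma Jt_sm1: "Jt (msmult c X) Y Z = msmult c (Jt X Y Z)"
  unfolding Jt_def by (simp add: smult_mult_left smult_mult_right f_sm1 f_sm2 smult_add[symmetric] f_add2[symmetric])
lemma Jt_sym: "Jt X Y Z = Jt Y X Z"
  unfolding Jt_def by (simp add: add_ac)

lemma Jt_all: "Jt X Y Z = 0"
proof -
  have "\<forall>X Z. Jt X Y Z = 0"
  proof (rule herm_to_all[where Q = "\<lambda>Y. \<forall>X Z. Jt X Y Z = 0"])
    fix Y Y' assume "\<forall>X Z. Jt X Y Z = 0" "\<forall>X Z. Jt X Y' Z = 0"
    then show "\<forall>X Z. Jt X (Y + Y') Z = 0" by (simp add: Jt_sym[of _ "Y + Y'"] Jt_add1 Jt_sym[of Y] Jt_sym[of Y'])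
  next
    fix c Y assume "\<forall>X Z. Jt X Y Z = 0"
    then show "\<forall>X Z. Jt X (msmult c Y) Z = 0" by (simp add: Jt_sym[of _ "msmult c Y"] Jt_sm1 Jt_sym[of Y])
  next
    fix H2 :: "'n op" assume h2: "herm H2"
    show "\<forall>X Z. Jt X H2 Z = 0"
    proof (intro allI)
      fix X Z
      show "Jt X H2 Z = 0"
      proof (rule herm_to_all[where Q = "\<lambda>X. Jt X H2 Z = 0"])
        fix A B assume "Jt A H2 Z = 0" "Jt B H2 Z = 0" then show "Jt (A + B) H2 Z = 0" by (simp add: Jt_add1)
      next
        fix c A assume "Jt A H2 Z = 0" then show "Jt (msmult c A) H2 Z = 0" by (simp add: Jt_sm1)
      next
        fix H1 :: "'n op" assume "herm H1" then show "Jt H1 H2 Z = 0" using Jt_herm h2 by blast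
      qed
    qed
  qed
  then show ?thesis by blast
qed

lemma f_antisym: "f X Y = - f Y X"
proof -
  have "Jt X (mat 1) Y = f X (Y + Y) + f (mat 1) (X ** Y + Y ** X) + f Y (X + X)"
    unfolding Jt_def by simp
  then have "f X (Y + Y) + f Y (X + X) = 0" using Jt_all[of X "mat 1" Y] by (simp add: f_mat1)
  then have "(f X Y + f Y X) + (f X Y + f Y X) = 0"
    by (simp only: f_add2 add_ac)
  then have "f X Y + f Y X = 0" by (rule half_zero)
  then show ?thesis by (simp add: eq_neg_iff_add_eq_0)
qed

lemma f_self: "f X X = 0"
  using f_antisym[of X X] by (simp add: vec_eq_iff)

lemma J_rule: "f Z (X ** Y + Y ** X) = - f X (Y ** Z + Z ** Y) - f Y (X ** Z + Z ** X)"
  using Jt_all[of X Y Z] unfolding Jt_def by (simp add: algebra_simps eq_neg_iff_add_eq_0)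

end


context P6 begin

lemma herm_E_diag: "herm (E k k)" by (simp add: herm_def)

lemma orth: "herm H \<Longrightarrow> H ** Z = Z ** H \<Longrightarrow> hs_inner Z (f H Y) = 0"
  using f_SA[of Z H Y] f_herm_comm[of H Z] by (simp add: herm_def)

lemma L1: "(p \<noteq> k \<and> q \<noteq> k) \<or> (p = k \<and> q = k) \<Longrightarrow> f (E k k) (E p q) = 0"
  by (rule f_herm_comm[OF herm_E_diag]) (auto simp: E_mult)

lemma L3: "(p \<noteq> k \<and> q \<noteq> k) \<or> (p = k \<and> q = k) \<Longrightarrow> f (E k k) Y $ p $ q = 0"
  using orth[OF herm_E_diag, of k "E p q" Y] by (auto simp: E_mult)

lemma L2: assumes "a \<noteq> b" shows "f (E b b) (E a b) = - f (E a a) (E a b)"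
proof -
  have h: "herm (E a a + E b b)" by (simp add: herm_def dagger_add)
  have c: "(E a a + E b b) ** E a b = E a b ** (E a a + E b b)"
    using assms by (simp add: matrix_add_ldistrib matrix_add_rdistrib' E_mult)
  have "f (E a a) (E a b) + f (E b b) (E a b) = 0"
    using f_herm_comm[OF h c] by (simp add: f_add1)
  then show ?thesis by (simp add: eq_neg_iff_add_eq_0 add.commute)
qed

definition alpha :: "'n \<Rightarrow> 'n \<Rightarrow> complex" where
  "alpha a b = f (E a a) (E a b) $ a $ b"

lemma L4: assumes "a \<noteq> b" shows "f (E a a) (E a b) = msmult (alpha a b) (E a b)"
proof (rule mat_eqI)
  fix p q
  show "f (E a a) (E a b) $ p $ q = msmult (alpha a b) (E a b) $ p $ q"
  proof (cases "(p, q) = (a, b)")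
    case True then show ?thesis by (simp add: alpha_def)
  next
    case False
    note F = False
    show ?thesis
    proof (cases "(p, q) = (b, a)")
      case True
      have "f (E a a) (E a b) $ b $ a = hs_inner (E b a) (f (E a a) (E a b))" by simp
      also have "\<dots> = - hs_inner (E b a) (f (E a b) (E a a))"
        by (subst f_antisym) (simp add: hs_inner_alt sum_negf)
      also have "\<dots> = - hs_inner (f (E b a) (E b a)) (E a a)" by (simp add: f_SA)
      also have "\<dots> = 0" by (simp add: f_self)
      finally show ?thesis using True assms by simp
    next
      case False
      show ?thesis
      proof (cases "(p \<noteq> a \<and> q \<noteq> a) \<or> (p = a \<and> q = a)")
        case True then show ?thesis using L3[OF True] assms by auto
      next
        case False
        then have "(p \<noteq> b \<and> q \<noteq> b)" using F \<open>(p, q) \<noteq> (b, a)\<close> assms by auto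
        then have "f (E b b) (E a b) $ p $ q = 0" using L3 by blast
        then show ?thesis using L2[OF assms] F \<open>(p, q) \<noteq> (b, a)\<close> by auto
      qed
    qed
  qed
qed

lemma L5: "cnj (alpha a b) = alpha a b"
proof -
  have "alpha a b = hs_inner (E a b) (f (E a a) (E a b))" by (simp add: alpha_def)
  also have "\<dots> = hs_inner (f (E a a) (E a b)) (E a b)" by (simp add: f_SA)
  also have "\<dots> = cnj (alpha a b)" by (simp add: alpha_def)
  finally show ?thesis by simp
qed

lemma L6: assumes "a \<noteq> b" shows "alpha a b = alpha b a"
proof -
  have fba: "f (E b a) (E a a) = msmult (alpha b a) (E b a)"
  proof -
    have "f (E b a) (E a a) = - f (E a a) (E b a)" by (rule f_antisym)
    also have "\<dots> = f (E b b) (E b a)" using L2[of b a] assms by simp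
    also have "\<dots> = msmult (alpha b a) (E b a)" using L4[of b a] assms by simp
    finally show ?thesis .
  qed
  have fab: "f (E a b) (E a a) = - msmult (alpha a b) (E a b)"
    using f_antisym[of "E a b" "E a a"] L4[OF assms] by simp
  have "hs_inner (E a a) (f (E a b) (E b a)) = hs_inner (f (E b a) (E a a)) (E b a)" by (simp add: f_SA)
  also have "\<dots> = alpha b a" using L5[of b a] by (simp add: fba)
  finally have 1: "hs_inner (E a a) (f (E a b) (E b a)) = alpha b a" .
  have "hs_inner (E a a) (f (E a b) (E b a)) = - hs_inner (E a a) (f (E b a) (E a b))"
    by (subst f_antisym) simp
  also have "\<dots> = - hs_inner (f (E a b) (E a a)) (E a b)" by (simp add: f_SA)
  also have "\<dots> = alpha a b" using L5[of a b] by (simp add: fab)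
  finally show ?thesis using 1 by simp
qed

lemma J_inst: "f (E a b) (E p q) = - f (E p q) (E a b)"
  by (rule f_antisym)

lemma R2:
  assumes "a \<noteq> b" "p \<noteq> a" "q \<noteq> a"
  shows "f (E a b) (E p q) = (if b = p then f (E a a) (E a q) else 0)"
proof -
  have "f (E p q) (E a b ** E a a + E a a ** E a b)
     = - f (E a b) (E a a ** E p q + E p q ** E a a) - f (E a a) (E a b ** E p q + E p q ** E a b)"
    by (rule J_rule)
  moreover have "E a b ** E a a + E a a ** E a b = E a b" using assms by (simp add: E_mult)
  moreover have "E a a ** E p q + E p q ** E a a = 0" using assms by (simp add: E_mult)
  moreover have "E a b ** E p q + E p q ** E a b = (if b = p then E a q else 0)" using assms by (simp add: E_mult)
  ultimately have "f (E p q) (E a b) = - f (E a a) (if b = p then E a q else 0)" by simp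
  then show ?thesis using f_antisym[of "E a b" "E p q"] by (cases "b = p") simp_all
qed

lemma R1:
  assumes "a \<noteq> b" "p \<noteq> b" "q \<noteq> b"
  shows "f (E a b) (E p q) = (if q = a then f (E b b) (E p b) else 0)"
proof -
  have "f (E p q) (E a b ** E b b + E b b ** E a b)
     = - f (E a b) (E b b ** E p q + E p q ** E b b) - f (E b b) (E a b ** E p q + E p q ** E a b)"
    by (rule J_rule)
  moreover have "E a b ** E b b + E b b ** E a b = E a b" using assms by (simp add: E_mult)
  moreover have "E b b ** E p q + E p q ** E b b = 0" using assms by (simp add: E_mult)
  moreover have "E a b ** E p q + E p q ** E a b = (if q = a then E p b else 0)" using assms by (simp add: E_mult)
  ultimately have "f (E p q) (E a b) = - f (E b b) (if q = a then E p b else 0)" by simp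
  then show ?thesis using f_antisym[of "E a b" "E p q"] by (cases "q = a") simp_all
qed

end


lemma smult_neg: "msmult c (- X) = - msmult c X"
  by (rule mat_eqI) simp

context P6 begin

lemma fdiag2: "p \<noteq> a \<Longrightarrow> f (E a a) (E p a) = - msmult (alpha p a) (E p a)"
  using L2[of p a] L4[of p a] by simp

lemma L8:
  assumes "a \<noteq> b"
  shows "f (E a b) (E b a) = msmult (alpha a b) (E a a - E b b)"
proof (rule mat_eqI)
  fix p q
  have sa: "f (E a b) (E b a) $ p $ q = cnj (f (E b a) (E p q) $ b $ a)" for p q
  proof -
    have "f (E a b) (E b a) $ p $ q = hs_inner (E p q) (f (E a b) (E b a))" by simp
    also have "\<dots> = hs_inner (f (E b a) (E p q)) (E b a)" by (simp add: f_SA)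
    finally show ?thesis by simp
  qed
  have ba: "f (E a b) (E b a) $ b $ a = 0" using sa[of b a] by (simp add: f_self)
  have ab: "f (E a b) (E b a) $ a $ b = 0"
  proof -
    have "f (E b a) (E a b) $ b $ a = - (f (E a b) (E b a) $ b $ a)"
      by (subst f_antisym) simp
    then show ?thesis using sa[of a b] ba by simp
  qed
  have ab': "alpha b a = alpha a b" using L6[OF assms] by simp
  show "f (E a b) (E b a) $ p $ q = msmult (alpha a b) (E a a - E b b) $ p $ q"
  proof (cases "p \<noteq> a \<and> q \<noteq> a")
    case True
    have "f (E b a) (E p q) = (if q = b then f (E a a) (E p a) else 0)"
      using R1[of b a p q] True assms by simp
    then show ?thesis using sa[of p q] True assms fdiag2[of p a] L5[of b a] ab'
      by (cases "q = b") auto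
  next
    case False
    note F = False
    show ?thesis
    proof (cases "p \<noteq> b \<and> q \<noteq> b")
      case True
      have "f (E b a) (E p q) = (if a = p then f (E b b) (E b q) else 0)"
        using R2[of b a p q] True assms by simp
      have pq: "(p = a \<and> q = a) \<or> (p = a \<and> q \<noteq> a) \<or> (p \<noteq> a \<and> q = a)" using F by auto
      then show ?thesis
      proof (elim disjE)
        assume c: "p = a \<and> q = a"
        have "f (E b a) (E p q) = msmult (alpha b a) (E b a)" using \<open>f (E b a) (E p q) = _\<close> c L4[of b a] assms by simp
        then show ?thesis using sa[of p q] c assms L5[of b a] ab' by simp
      next
        assume c: "p = a \<and> q \<noteq> a"
        have "f (E b a) (E p q) = msmult (alpha b q) (E b q)" using \<open>f (E b a) (E p q) = _\<close> c L4[of b q] True by (simp add: eq_commute[of b q])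
        then show ?thesis using sa[of p q] c True assms by auto
      next
        assume c: "p \<noteq> a \<and> q = a"
        have "f (E b a) (E p q) = 0" using \<open>f (E b a) (E p q) = _\<close> c by auto
        then show ?thesis using sa[of p q] c True assms by simp
      qed
    next
      case False
      then have "(p = a \<and> q = b) \<or> (p = b \<and> q = a)" using F assms by auto
      then show ?thesis using ab ba assms by auto
    qed
  qed
qed

lemma L9:
  assumes "a \<noteq> b" "a \<noteq> d" "b \<noteq> d"
  shows "alpha a d = alpha b d"
proof -
  have "hs_inner (E a d) (f (E a b) (E b d)) = hs_inner (f (E b a) (E a d)) (E b d)" by (simp add: f_SA)
  moreover have "f (E a b) (E b d) = msmult (alpha a d) (E a d)"
    using R2[of a b b d] L4[of a d] assms by simp
  moreover have "f (E b a) (E a d) = msmult (alpha b d) (E b d)"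
    using R2[of b a a d] L4[of b d] assms by simp
  ultimately show ?thesis using L5[of b d] assms by simp
qed

lemma alpha_first: "a \<noteq> d \<Longrightarrow> b \<noteq> d \<Longrightarrow> alpha a d = alpha b d"
  using L9 by (cases "a = b") auto

lemma alpha_uniform:
  assumes "a \<noteq> b" "u \<noteq> v"
  shows "alpha a b = alpha u v"
proof (cases "u = b")
  case False
  have "alpha a b = alpha u b" using alpha_first assms False by metis
  also have "\<dots> = alpha b u" using L6 False by metis
  also have "\<dots> = alpha v u" using alpha_first assms False by metis
  also have "\<dots> = alpha u v" using L6 assms by metis
  finally show ?thesis .
next
  case True
  have "alpha a b = alpha v b" using alpha_first assms True by metis
  also have "\<dots> = alpha b v" using L6 assms True by metis
  finally show ?thesis using True by simp
qed

lemma basis_formula: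
  assumes unif: "\<And>a b. a \<noteq> b \<Longrightarrow> alpha a b = c"
  shows "f (E a b) (E p q) = msmult c (E a b ** E p q - E p q ** E a b)"
proof (cases "a = b")
  case True
  show ?thesis
  proof (cases "(p \<noteq> a \<and> q \<noteq> a) \<or> (p = a \<and> q = a)")
    case T: True
    then show ?thesis using L1[OF T] True by (auto simp: E_mult)
  next
    case False
    then consider "p = a" "q \<noteq> a" | "q = a" "p \<noteq> a" by auto
    then show ?thesis
    proof cases
      case 1 then show ?thesis using True L4[of a q] unif[of a q] by (simp add: E_mult)
    next
      case 2 then show ?thesis using True fdiag2[of p a] unif[of p a] by (simp add: E_mult smult_minus smult_neg)
    qed
  qed
next
  case False
  note ab = False
  show ?thesis
  proof (cases "p \<noteq> a \<and> q \<noteq> a")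
    case True
    then show ?thesis using R2[of a b p q] ab L4[of a q] unif[of a q] by (auto simp: E_mult)
  next
    case F1: False
    show ?thesis
    proof (cases "p \<noteq> b \<and> q \<noteq> b")
      case True
      then show ?thesis using R1[of a b p q] ab fdiag2[of p b] unif[of p b] F1
        by (auto simp: E_mult smult_minus smult_neg)
    next
      case False
      then have "(p = a \<and> q = b) \<or> (p = b \<and> q = a)" using F1 ab by auto
      then show ?thesis
      proof
        assume "p = a \<and> q = b" then show ?thesis by (simp add: f_self)
      next
        assume "p = b \<and> q = a" then show ?thesis using L8[OF ab] unif[OF ab] ab by (simp add: E_mult)
      qed
    qed
  qed
qed

end


lemma basis_induct:
  assumes z: "Q 0" and add: "\<And>X Y. Q X \<Longrightarrow> Q Y \<Longrightarrow> Q (X + Y)"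
    and sm: "\<And>c X. Q X \<Longrightarrow> Q (msmult c X)" and b: "\<And>a b. Q (E a b)"
  shows "Q (X::'n::finite op)"
proof -
  have fin: "finite S \<Longrightarrow> Q (\<Sum>x\<in>S. msmult (X $ fst x $ snd x) (E (fst x) (snd x)))" for S :: "('n \<times> 'n) set"
    by (induct rule: finite_induct) (auto intro: z add sm b)
  have "X = (\<Sum>x\<in>UNIV. msmult (X $ fst x $ snd x) (E (fst x) (snd x)))"
  proof (rule mat_eqI)
    fix i j
    have "(\<Sum>x\<in>UNIV. msmult (X $ fst x $ snd x) (E (fst x) (snd x))) $ i $ j
        = (\<Sum>x\<in>UNIV. X $ fst x $ snd x * (if i = fst x \<and> j = snd x then 1 else 0))"
      by (simp add: sum_component)
    also have "\<dots> = (\<Sum>x\<in>UNIV. if x = (i, j) then X $ i $ j else 0)"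
      by (rule sum.cong) auto
    also have "\<dots> = X $ i $ j" by simp
    finally show "X $ i $ j = (\<Sum>x\<in>UNIV. msmult (X $ fst x $ snd x) (E (fst x) (snd x))) $ i $ j"
      by simp
  qed
  then show ?thesis using fin[of UNIV] by simp
qed

context P6 begin

lemma f_formula:
  assumes fb: "\<And>a b p q. f (E a b) (E p q) = msmult c (E a b ** E p q - E p q ** E a b)"
  shows "f X Y = msmult c (X ** Y - Y ** X)"
proof -
  let ?Q = "\<lambda>X. \<forall>Y. f X Y = msmult c (X ** Y - Y ** X)"
  have "?Q X"
  proof (rule basis_induct[where Q = ?Q])
    show "?Q 0" by simp
  next
    fix X X' assume a: "?Q X" "?Q X'"
    show "?Q (X + X')"
    proof
      fix Y
      show "f (X + X') Y = msmult c ((X + X') ** Y - Y ** (X + X'))"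
        using a by (intro mat_eqI) (simp add: f_add1 matrix_add_rdistrib' matrix_add_ldistrib algebra_simps)
    qed
  next
    fix d X assume a: "?Q X"
    show "?Q (msmult d X)"
    proof
      fix Y
      show "f (msmult d X) Y = msmult c (msmult d X ** Y - Y ** msmult d X)"
        using a by (intro mat_eqI) (simp add: f_sm1 smult_mult_left smult_mult_right algebra_simps)
    qed
  next
    fix a b
    show "?Q (E a b)"
    proof
      fix Y
      show "f (E a b) Y = msmult c (E a b ** Y - Y ** E a b)"
      proof (rule basis_induct[where Q = "\<lambda>Y. f (E a b) Y = msmult c (E a b ** Y - Y ** E a b)"])
        show "f (E a b) 0 = msmult c (E a b ** 0 - 0 ** E a b)" by simp
      next
        fix Y Y' assume "f (E a b) Y = msmult c (E a b ** Y - Y ** E a b)"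
          "f (E a b) Y' = msmult c (E a b ** Y' - Y' ** E a b)"
        then show "f (E a b) (Y + Y') = msmult c (E a b ** (Y + Y') - (Y + Y') ** E a b)"
          by (intro mat_eqI) (simp add: f_add2 matrix_add_rdistrib' matrix_add_ldistrib algebra_simps)
      next
        fix d Y assume "f (E a b) Y = msmult c (E a b ** Y - Y ** E a b)"
        then show "f (E a b) (msmult d Y) = msmult c (E a b ** msmult d Y - msmult d Y ** E a b)"
          by (intro mat_eqI) (simp add: f_sm2 smult_mult_left smult_mult_right algebra_simps)
      next
        fix p q show "f (E a b) (E p q) = msmult c (E a b ** E p q - E p q ** E a b)" by (rule fb)
      qed
    qed
  qed
  then show ?thesis by blast
qed

lemma main: "\<exists>c::real. \<forall>X Y. L X Y = X ** Y + msmult (of_real c) (X ** Y - Y ** X)"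
proof -
  obtain c0 where unif: "\<And>a b. a \<noteq> b \<Longrightarrow> alpha a b = c0" and re: "cnj c0 = c0"
  proof (cases "\<exists>a b::'n. a \<noteq> b")
    case True
    then obtain a0 b0 :: 'n where "a0 \<noteq> b0" by blast
    then show ?thesis using that[of "alpha a0 b0"] alpha_uniform L5 by metis
  next
    case False
    then show ?thesis using that[of 0] by auto
  qed
  have fX: "f X Y = msmult c0 (X ** Y - Y ** X)" for X Y
    by (rule f_formula) (rule basis_formula[OF unif])
  have c0r: "complex_of_real (Re c0) = c0" using re by (simp add: complex_eq_iff)
  show ?thesis
  proof (intro exI allI)
    fix X Y
    have "L X Y = f X Y + X ** Y" by (simp add: f_def)
    then show "L X Y = X ** Y + msmult (complex_of_real (Re c0)) (X ** Y - Y ** X)"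
      by (simp add: fX c0r add.commute)
  qed
qed

end

lemma density_E: "density (E a a :: 'n::finite op)"
proof -
  have "0 \<le> qf (E a a :: 'n op) v" for v
  proof -
    have "qf (E a a :: 'n op) v = (\<Sum>i\<in>UNIV. \<Sum>j\<in>UNIV. if i = a \<and> j = a then cnj (v $ i) * v $ j else 0)"
      unfolding qf_alt by (intro sum.cong) auto
    also have "\<dots> = cnj (v $ a) * v $ a" by (rule sum2_delta)
    also have "\<dots> = complex_of_real ((cmod (v $ a))\<^sup>2)" by (rule cnj_mult_self)
    finally show ?thesis by (simp add: less_eq_complex_def)
  qed
  moreover have "mtrace (E a a :: 'n op) = 1" by (simp add: mtrace_def)
  ultimately show ?thesis by (simp add: density_def psd_qf)
qed

theorem proposition6:
  fixes \<Theta> :: "'n::finite op \<Rightarrow> 'n op \<Rightarrow> 'n op"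
  assumes lin_each: "\<And>\<rho>. density \<rho> \<Longrightarrow> op_linear (\<Theta> \<rho>)"
    and lin_rho: "\<exists>L :: 'n op \<Rightarrow> 'n op \<Rightarrow> 'n op.
                    (\<forall>M. op_linear (\<lambda>\<rho>. L \<rho> M)) \<and> (\<forall>\<rho>. density \<rho> \<longrightarrow> L \<rho> = \<Theta> \<rho>)"
    and comm: "\<And>\<rho> M. density \<rho> \<Longrightarrow> \<rho> ** M = M ** \<rho> \<Longrightarrow> \<Theta> \<rho> M = \<rho> ** M"
    and selfadj: "\<And>\<rho> X Y. density \<rho> \<Longrightarrow> hs_inner X (\<Theta> \<rho> Y) = hs_inner (\<Theta> \<rho> X) Y"
  shows "\<exists>\<mu>::real.
           (\<forall>\<rho> M. density \<rho> \<longrightarrow>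
              \<Theta> \<rho> M = msmult (complex_of_real \<mu>) (\<rho> ** M)
                        + msmult (complex_of_real (1 - \<mu>)) (M ** \<rho>))
         \<and> ((\<forall>\<rho> M. density \<rho> \<longrightarrow> 0 \<le> hs_inner M (\<Theta> \<rho> M)) \<longrightarrow> 0 \<le> \<mu> \<and> \<mu> \<le> 1)"
proof -
  obtain L :: "'n op \<Rightarrow> 'n op \<Rightarrow> 'n op" where HL1: "\<And>M. op_linear (\<lambda>\<rho>. L \<rho> M)"
    and HL2: "\<And>\<rho>. density \<rho> \<Longrightarrow> L \<rho> = \<Theta> \<rho>"
    using lin_rho by blast
  interpret P6 L
  proof
    show "\<And>M. op_linear (\<lambda>\<rho>. L \<rho> M)" by (rule HL1)
    show "\<And>\<rho>. density \<rho> \<Longrightarrow> op_linear (L \<rho>)" using HL2 lin_each by simp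
    show "\<And>\<rho> M. density \<rho> \<Longrightarrow> \<rho> ** M = M ** \<rho> \<Longrightarrow> L \<rho> M = \<rho> ** M" using HL2 comm by simp
    show "\<And>\<rho> X Y. density \<rho> \<Longrightarrow> hs_inner X (L \<rho> Y) = hs_inner (L \<rho> X) Y" using HL2 selfadj by simp
  qed
  obtain c :: real where Lc: "\<And>X Y. L X Y = X ** Y + msmult (of_real c) (X ** Y - Y ** X)"
    using main by blast
  show ?thesis
  proof (cases "\<exists>a b::'n. a \<noteq> b")
    case True
    then obtain a b :: 'n where ab: "a \<noteq> b" by blast
    define \<mu> where "\<mu> = 1 + c"
    have form: "\<Theta> \<rho> M = msmult (complex_of_real \<mu>) (\<rho> ** M) + msmult (complex_of_real (1 - \<mu>)) (M ** \<rho>)"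
      if "density \<rho>" for \<rho> M
      using HL2[OF that, symmetric] Lc[of \<rho> M] unfolding \<mu>_def
      by (intro mat_eqI) (simp add: algebra_simps)
    have bounds: "0 \<le> \<mu> \<and> \<mu> \<le> 1" if psdH: "\<forall>\<rho> M. density \<rho> \<longrightarrow> 0 \<le> hs_inner M (\<Theta> \<rho> M)"
    proof -
      have "0 \<le> hs_inner (E a b) (\<Theta> (E a a) (E a b))" using psdH density_E by blast
      moreover have "hs_inner (E a b) (\<Theta> (E a a) (E a b)) = complex_of_real \<mu>"
        using ab by (simp add: form[OF density_E] E_mult)
      ultimately have 1: "0 \<le> \<mu>" by (simp add: less_eq_complex_def)
      have "0 \<le> hs_inner (E b a) (\<Theta> (E a a) (E b a))" using psdH density_E by blast
      moreover have "hs_inner (E b a) (\<Theta> (E a a) (E b a)) = complex_of_real (1 - \<mu>)"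
        using ab by (simp add: form[OF density_E] E_mult)
      ultimately have 2: "\<mu> \<le> 1" by (simp add: less_eq_complex_def)
      show ?thesis using 1 2 by simp
    qed
    show ?thesis using form bounds by blast
  next
    case False
    have cm: "X ** Y = Y ** X" for X Y :: "'n op"
    proof (rule mat_eqI)
      fix i j
      have all: "\<And>x y::'n. x = y" using False by blast
      have U: "(UNIV :: 'n set) = {i}" using all by auto
      have ji: "j = i" by (rule all)
      show "(X ** Y) $ i $ j = (Y ** X) $ i $ j"
        unfolding mult_comp U ji by (simp add: mult.commute)
    qed
    have form: "\<Theta> \<rho> M = msmult (complex_of_real 1) (\<rho> ** M) + msmult (complex_of_real (1 - 1)) (M ** \<rho>)"
      if "density \<rho>" for \<rho> M
      using HL2[OF that, symmetric] Lc[of \<rho> M] cm[of M \<rho>] by simp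
    show ?thesis using form by (intro exI[of _ 1]) simp
  qed
qed



end
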